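(* Let $(A,[\cdot,\cdot])$ be a Malcev algebra, $\rho:A\to\mathrm{End}(V)$ a representation of $A$, $\widehat{A}=A\ltimes_{\rho^*}V^*$, and $T:V\to A$ a linear map. The following are equivalent: (i) $T$ is an $\mathcal{O}$-operator of $A$ associated to $\rho$; (ii) $T-\sigma(T)$ is a skew-symmetric solution of the Malcev Yang-Baxter equation in $\widehat{A}$; (iii) $T-\sigma(T)$, regarded as a linear map $\widehat{A}^*\to\widehat{A}$, is an $\mathcal{O}$-operator of the Malcev algebra $\widehat{A}$ associated to the representation $\mathrm{ad}^*$ of $\widehat{A}$ on $\widehat{A}^*$.
   Context: Field $\mathbb{K}$ of characteristic zero, finite-dimensional spaces. A Malcev algebra is a vector space with an anti-symmetric bracket satisfying $J(x,y,[x,z])=[J(x,y,z),x]$, $J(x,y,z)=[[x,y],z]+[[z,x],y]+[[y,z],x]$. A representation of $A$ on $V$ is a linear map $\rho:A\to\mathrm{End}(V)$ with $\rho([[x,y],z])=\rho(x)\rho(y)\rho(z)-\rho(z)\rho(x)\rho(y)+\rho(y)\rho([z,x])-\rho([y,z])\rho(x)$. Its dual $\rho^*$ is given by $\langle\rho^*(x)a^*,b\rangle=-\langle a^*,\rho(x)b\rangle$. $\widehat{A}=A\ltimes_{\rho^*}V^*$ is $A\oplus V^*$ with bracket $[x+a^*,y+b^*]=[x,y]+\rho^*(x)b^*-\rho^*(y)a^*$. The adjoint representation is $\mathrm{ad}(x)y=[x,y]$, and $\mathrm{ad}^*$ is its dual. An $\mathcal{O}$-operator associated to a representation $(W,\pi)$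 of a Malcev algebra $L$ is a linear map $S:W\to L$ with $[S(a),S(b)]=S(\pi(S(a))b-\pi(S(b))a)$. $T$ is identified with $\sum_i T(v_i)\otimes v_i^*\in\widehat{A}\otimes\widehat{A}$ ($\{v_i\}$ a basis of $V$, $\{v_i^*\}$ the dual basis), $\sigma(a\otimes b)=b\otimes a$, and an element $r\in\widehat{A}\otimes\widehat{A}$ is regarded as a map $\widehat{A}^*\to\widehat{A}$ via $\langle a^*,r(b^* )\rangle=\langle a^*\otimes b^*,r\rangle$. For $r=\sum_i x_i\otimes y_i$, $r$ solves the Malcev Yang-Baxter equation if $\sum_{i,j}[x_i,x_j]\otimes y_i\otimes y_j+\sum_{i,j}x_i\otimes[y_i,x_j]\otimes y_j+\sum_{i,j}x_i\otimes x_j\otimes[y_i,y_j]=0$. *)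

theory Defs
  imports "HOL-Library.Function_Algebras"
begin

text \<open>Coordinate model of finite-dimensional spaces over a field 'k.
  A space with basis indexed by a finite set I is represented by the functions
  x :: 'i => 'k vanishing outside I (coordinates w.r.t. the basis e_i).
  A bilinear bracket is given by structure constants C i j k
  ([e_i, e_j] = sum_k C i j k e_k); a linear action of A on a space with basis
  indexed by J is given by R i a b (rho(e_i) v_b = sum_a R i a b v_a);
  a linear map S : W -> L is given by its matrix M i b (S(w_b) = sum_i M i b e_i).\<close>

definition vecs :: "'i set \<Rightarrow> ('i \<Rightarrow> 'k::zero) set" where
  "vecs I = {x. \<forall>k. k \<notin> I \<longrightarrow> x k = 0}"

definition bv :: "'i \<Rightarrow> 'i \<Rightarrow> 'k::{zero,one}" where
  "bv p = (\<lambda>k. if k = p then 1 else 0)"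

definition brk :: "'i set \<Rightarrow> ('i \<Rightarrow> 'i \<Rightarrow> 'i \<Rightarrow> 'k::comm_ring_1)
    \<Rightarrow> ('i \<Rightarrow> 'k) \<Rightarrow> ('i \<Rightarrow> 'k) \<Rightarrow> ('i \<Rightarrow> 'k)" where
  "brk I C x y = (\<lambda>k. if k \<in> I then (\<Sum>i\<in>I. \<Sum>j\<in>I. x i * y j * C i j k) else 0)"

definition jac :: "'i set \<Rightarrow> ('i \<Rightarrow> 'i \<Rightarrow> 'i \<Rightarrow> 'k::comm_ring_1)
    \<Rightarrow> ('i \<Rightarrow> 'k) \<Rightarrow> ('i \<Rightarrow> 'k) \<Rightarrow> ('i \<Rightarrow> 'k) \<Rightarrow> ('i \<Rightarrow> 'k)" where
  "jac I C x y z = brk I C (brk I C x y) z + brk I C (brk I C z x) y + brk I C (brk I C y z) x"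

definition malcev_alg :: "'i set \<Rightarrow> ('i \<Rightarrow> 'i \<Rightarrow> 'i \<Rightarrow> 'k::comm_ring_1) \<Rightarrow> bool" where
  "malcev_alg I C \<longleftrightarrow>
     (\<forall>x\<in>vecs I. \<forall>y\<in>vecs I. brk I C x y = - brk I C y x) \<and>
     (\<forall>x\<in>vecs I. \<forall>y\<in>vecs I. \<forall>z\<in>vecs I.
        jac I C x y (brk I C x z) = brk I C (jac I C x y z) x)"

definition act :: "'i set \<Rightarrow> 'j set \<Rightarrow> ('i \<Rightarrow> 'j \<Rightarrow> 'j \<Rightarrow> 'k::comm_ring_1)
    \<Rightarrow> ('i \<Rightarrow> 'k) \<Rightarrow> ('j \<Rightarrow> 'k) \<Rightarrow> ('j \<Rightarrow> 'k)" where
  "act I J R x v = (\<lambda>a. if a \<in> J then (\<Sum>i\<in>I. \<Sum>b\<in>J. x i * R i a b * v b) else 0)"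

definition is_rep :: "'i set \<Rightarrow> ('i \<Rightarrow> 'i \<Rightarrow> 'i \<Rightarrow> 'k::comm_ring_1) \<Rightarrow> 'j set
    \<Rightarrow> ('i \<Rightarrow> 'j \<Rightarrow> 'j \<Rightarrow> 'k) \<Rightarrow> bool" where
  "is_rep I C J R \<longleftrightarrow>
     (\<forall>x\<in>vecs I. \<forall>y\<in>vecs I. \<forall>z\<in>vecs I. \<forall>v\<in>vecs J.
        act I J R (brk I C (brk I C x y) z) v =
          act I J R x (act I J R y (act I J R z v))
        - act I J R z (act I J R x (act I J R y v))
        + act I J R y (act I J R (brk I C z x) v)
        - act I J R (brk I C y z) (act I J R x v))"

text \<open>Dual representation w.r.t. the dual basis:
  <rho*(x) a*, b> = - <a*, rho(x) b>.\<close>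
definition dual_rep :: "('i \<Rightarrow> 'j \<Rightarrow> 'j \<Rightarrow> 'k::comm_ring_1) \<Rightarrow> ('i \<Rightarrow> 'j \<Rightarrow> 'j \<Rightarrow> 'k)" where
  "dual_rep R = (\<lambda>i b c. - R i c b)"

text \<open>Adjoint representation: ad(x) y = [x,y].\<close>
definition ad_rep :: "('i \<Rightarrow> 'i \<Rightarrow> 'i \<Rightarrow> 'k) \<Rightarrow> ('i \<Rightarrow> 'i \<Rightarrow> 'i \<Rightarrow> 'k)" where
  "ad_rep C = (\<lambda>i a b. C i b a)"

definition linmap :: "'i set \<Rightarrow> 'j set \<Rightarrow> ('i \<Rightarrow> 'j \<Rightarrow> 'k::comm_ring_1)
    \<Rightarrow> ('j \<Rightarrow> 'k) \<Rightarrow> ('i \<Rightarrow> 'k)" where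
  "linmap I J M w = (\<lambda>i. if i \<in> I then (\<Sum>b\<in>J. M i b * w b) else 0)"

definition O_operator :: "'i set \<Rightarrow> ('i \<Rightarrow> 'i \<Rightarrow> 'i \<Rightarrow> 'k::comm_ring_1) \<Rightarrow> 'j set
    \<Rightarrow> ('i \<Rightarrow> 'j \<Rightarrow> 'j \<Rightarrow> 'k) \<Rightarrow> ('i \<Rightarrow> 'j \<Rightarrow> 'k) \<Rightarrow> bool" where
  "O_operator I C J P M \<longleftrightarrow>
     (\<forall>a\<in>vecs J. \<forall>b\<in>vecs J.
        brk I C (linmap I J M a) (linmap I J M b) =
        linmap I J M (act I J P (linmap I J M a) b - act I J P (linmap I J M b) a))"

text \<open>Structure constants of the semidirect product A \<ltimes>_{rho*} V^*, basis
  Inl i = e_i (of A) and Inr b = v_b^* (dual basis of V^*):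
  [x + a*, y + b*] = [x,y] + rho*(x) b* - rho*(y) a*.\<close>
definition semidirect :: "('i \<Rightarrow> 'i \<Rightarrow> 'i \<Rightarrow> 'k::comm_ring_1) \<Rightarrow> ('i \<Rightarrow> 'j \<Rightarrow> 'j \<Rightarrow> 'k)
    \<Rightarrow> ('i + 'j) \<Rightarrow> ('i + 'j) \<Rightarrow> ('i + 'j) \<Rightarrow> 'k" where
  "semidirect C R p q s =
     (case (p, q, s) of
        (Inl i, Inl j, Inl k) \<Rightarrow> C i j k
      | (Inl i, Inr c, Inr b) \<Rightarrow> dual_rep R i b c
      | (Inr c, Inl i, Inr b) \<Rightarrow> - dual_rep R i b c
      | _ \<Rightarrow> 0)"

text \<open>Tensors in \<^emph>\<open>Ahat \<otimes> Ahat\<close> as coefficient arrays w.r.t. the basis e_p \<otimes> e_q.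
  T = sum_b T(v_b) \<otimes> v_b^*.\<close>
definition tensor_of_map :: "('i \<Rightarrow> 'j \<Rightarrow> 'k::zero) \<Rightarrow> ('i + 'j) \<Rightarrow> ('i + 'j) \<Rightarrow> 'k" where
  "tensor_of_map T p q = (case (p, q) of (Inl i, Inr b) \<Rightarrow> T i b | _ \<Rightarrow> 0)"

definition flip_tensor :: "('a \<Rightarrow> 'a \<Rightarrow> 'k) \<Rightarrow> 'a \<Rightarrow> 'a \<Rightarrow> 'k" where
  "flip_tensor r p q = r q p"

definition T_minus_sigma_T :: "('i \<Rightarrow> 'j \<Rightarrow> 'k::ab_group_add) \<Rightarrow> ('i + 'j) \<Rightarrow> ('i + 'j) \<Rightarrow> 'k" where
  "T_minus_sigma_T T = (\<lambda>p q. tensor_of_map T p q - flip_tensor (tensor_of_map T) p q)"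

definition skew_tensor :: "'a set \<Rightarrow> ('a \<Rightarrow> 'a \<Rightarrow> 'k::ab_group_add) \<Rightarrow> bool" where
  "skew_tensor I r \<longleftrightarrow> (\<forall>p\<in>I. \<forall>q\<in>I. r p q = - r q p)"

definition tensor3 :: "('a \<Rightarrow> 'k::times) \<Rightarrow> ('a \<Rightarrow> 'k) \<Rightarrow> ('a \<Rightarrow> 'k) \<Rightarrow> ('a \<times> 'a \<times> 'a \<Rightarrow> 'k)" where
  "tensor3 x y z = (\<lambda>(k, s, t). x k * y s * z t)"

text \<open>Malcev Yang-Baxter equation for r = sum_{p,q} r p q e_p \<otimes> e_q, i.e.
  with the terms x = r p q e_p, y = e_q.\<close>
definition MYBE :: "'a set \<Rightarrow> ('a \<Rightarrow> 'a \<Rightarrow> 'a \<Rightarrow> 'k::comm_ring_1) \<Rightarrow> ('a \<Rightarrow> 'a \<Rightarrow> 'k) \<Rightarrow> bool" where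
  "MYBE I C r \<longleftrightarrow>
    (\<Sum>p\<in>I. \<Sum>q\<in>I. \<Sum>p'\<in>I. \<Sum>q'\<in>I.
       (\<lambda>w. r p q * r p' q' *
          (tensor3 (brk I C (bv p) (bv p')) (bv q) (bv q') w
         + tensor3 (bv p) (brk I C (bv q) (bv p')) (bv q') w
         + tensor3 (bv p) (bv p') (brk I C (bv q) (bv q')) w))) = 0"

end

theory Submission
  imports Defs
begin

lemma sum_apply_fun: "(sum f A) x = (\<Sum>a\<in>A. f a x)"
  by (induction A rule: infinite_finite_induct) auto

lemma sum_swap4:
  "(\<Sum>i\<in>A. \<Sum>j\<in>B. \<Sum>u\<in>C. \<Sum>v\<in>D. F i j u v) = (\<Sum>u\<in>C. \<Sum>v\<in>D. \<Sum>i\<in>A. \<Sum>j\<in>B. F i j u v)"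
proof -
  have "(\<Sum>i\<in>A. \<Sum>j\<in>B. \<Sum>u\<in>C. \<Sum>v\<in>D. F i j u v) = (\<Sum>i\<in>A. \<Sum>u\<in>C. \<Sum>j\<in>B. \<Sum>v\<in>D. F i j u v)"
    by (rule sum.cong[OF refl], rule sum.swap)
  also have "\<dots> = (\<Sum>i\<in>A. \<Sum>u\<in>C. \<Sum>v\<in>D. \<Sum>j\<in>B. F i j u v)"
    by (rule sum.cong[OF refl], rule sum.cong[OF refl], rule sum.swap)
  also have "\<dots> = (\<Sum>u\<in>C. \<Sum>i\<in>A. \<Sum>v\<in>D. \<Sum>j\<in>B. F i j u v)"
    by (rule sum.swap)
  also have "\<dots> = (\<Sum>u\<in>C. \<Sum>v\<in>D. \<Sum>i\<in>A. \<Sum>j\<in>B. F i j u v)"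
    by (rule sum.cong[OF refl], rule sum.swap)
  finally show ?thesis .
qed

definition Lc where "Lc I C J M s u v = (\<Sum>i\<in>I. \<Sum>j\<in>I. M i u * M j v * C i j s)"
definition Rc where "Rc I J P M s u v =
   (\<Sum>c\<in>J. \<Sum>i\<in>I. M s c * M i u * P i c v) - (\<Sum>c\<in>J. \<Sum>i\<in>I. M s c * M i v * P i c u)"

lemma linmap_bv: "finite J \<Longrightarrow> v \<in> J \<Longrightarrow> linmap I J M (bv v) = (\<lambda>i. if i \<in> I then M i v else 0)"
  by (auto simp: linmap_def bv_def if_distrib[where f="\<lambda>x. _ * x"] sum.delta cong: if_cong)

lemma sum_bv: "finite A \<Longrightarrow> (\<Sum>x\<in>A. bv u x * f x) = (if u \<in> A then f u else (0::'k::comm_ring_1))"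
  unfolding bv_def by (simp add: if_distrib[where f="\<lambda>y. y * _"] cong: if_cong)

lemma linmap_apply: "s \<in> I \<Longrightarrow> linmap I J M w s = (\<Sum>c\<in>J. M s c * w c)"
  by (simp add: linmap_def)

lemma bv_vecs: "v \<in> J \<Longrightarrow> bv v \<in> vecs J"
  by (auto simp: vecs_def bv_def)

lemma brk_expand:
  "s \<in> I \<Longrightarrow> brk I C (linmap I J M a) (linmap I J M b) s =
     (\<Sum>u\<in>J. \<Sum>v\<in>J. a u * b v * Lc I C J M s u v)"
proof -
  assume s: "s \<in> I"
  have "brk I C (linmap I J M a) (linmap I J M b) s =
     (\<Sum>i\<in>I. \<Sum>j\<in>I. (\<Sum>u\<in>J. M i u * a u) * (\<Sum>v\<in>J. M j v * b v) * C i j s)"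
    using s by (simp add: brk_def linmap_def)
  also have "\<dots> = (\<Sum>i\<in>I. \<Sum>j\<in>I. \<Sum>v\<in>J. \<Sum>u\<in>J. a u * b v * (M i u * M j v * C i j s))"
    by (simp add: sum_distrib_left sum_distrib_right ac_simps)
  also have "\<dots> = (\<Sum>i\<in>I. \<Sum>j\<in>I. \<Sum>u\<in>J. \<Sum>v\<in>J. a u * b v * (M i u * M j v * C i j s))"
    by (rule sum.cong[OF refl], rule sum.cong[OF refl], rule sum.swap)
  also have "\<dots> = (\<Sum>u\<in>J. \<Sum>v\<in>J. \<Sum>i\<in>I. \<Sum>j\<in>I. a u * b v * (M i u * M j v * C i j s))"
    by (rule sum_swap4)
  also have "\<dots> = (\<Sum>u\<in>J. \<Sum>v\<in>J. a u * b v * Lc I C J M s u v)"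
    by (simp add: Lc_def sum_distrib_left)
  finally show ?thesis .
qed

lemma act_expand:
  "c \<in> J \<Longrightarrow> act I J P (linmap I J M a) b c =
     (\<Sum>u\<in>J. \<Sum>v\<in>J. a u * b v * (\<Sum>i\<in>I. M i u * P i c v))"
proof -
  assume c: "c \<in> J"
  have "act I J P (linmap I J M a) b c = (\<Sum>i\<in>I. \<Sum>v\<in>J. (\<Sum>u\<in>J. M i u * a u) * P i c v * b v)"
    using c by (simp add: act_def linmap_def)
  also have "\<dots> = (\<Sum>i\<in>I. \<Sum>v\<in>J. \<Sum>u\<in>J. a u * b v * (M i u * P i c v))"
    by (simp add: sum_distrib_left sum_distrib_right ac_simps)
  also have "\<dots> = (\<Sum>i\<in>I. \<Sum>u\<in>J. \<Sum>v\<in>J. a u * b v * (M i u * P i c v))"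
    by (rule sum.cong[OF refl], rule sum.swap)
  also have "\<dots> = (\<Sum>u\<in>J. \<Sum>i\<in>I. \<Sum>v\<in>J. a u * b v * (M i u * P i c v))"
    by (rule sum.swap)
  also have "\<dots> = (\<Sum>u\<in>J. \<Sum>v\<in>J. \<Sum>i\<in>I. a u * b v * (M i u * P i c v))"
    by (rule sum.cong[OF refl], rule sum.swap)
  also have "\<dots> = (\<Sum>u\<in>J. \<Sum>v\<in>J. a u * b v * (\<Sum>i\<in>I. M i u * P i c v))"
    by (simp add: sum_distrib_left)
  finally show ?thesis .
qed

lemma rhs_expand:
  "s \<in> I \<Longrightarrow> linmap I J M (act I J P (linmap I J M a) b - act I J P (linmap I J M b) a) s =
     (\<Sum>u\<in>J. \<Sum>v\<in>J. a u * b v * Rc I J P M s u v)"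
proof -
  assume s: "s \<in> I"
  have "linmap I J M (act I J P (linmap I J M a) b - act I J P (linmap I J M b) a) s =
    (\<Sum>c\<in>J. M s c * ((\<Sum>u\<in>J. \<Sum>v\<in>J. a u * b v * (\<Sum>i\<in>I. M i u * P i c v))
       - (\<Sum>v\<in>J. \<Sum>u\<in>J. b v * a u * (\<Sum>i\<in>I. M i v * P i c u))))"
    using s by (simp only: linmap_apply fun_diff_def) (rule sum.cong[OF refl], simp add: act_expand)
  also have "\<dots> = (\<Sum>c\<in>J. \<Sum>u\<in>J. \<Sum>v\<in>J. a u * b v * ((\<Sum>i\<in>I. M s c * M i u * P i c v)
       - (\<Sum>i\<in>I. M s c * M i v * P i c u)))"
    apply (rule sum.cong[OF refl])
    apply (subst (2) sum.swap)
    apply (simp add: sum_distrib_left right_diff_distrib sum_subtractf[symmetric] ac_simps)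
    done
  also have "\<dots> = (\<Sum>u\<in>J. \<Sum>v\<in>J. \<Sum>c\<in>J. a u * b v * ((\<Sum>i\<in>I. M s c * M i u * P i c v)
       - (\<Sum>i\<in>I. M s c * M i v * P i c u)))"
    apply (rule trans[OF sum.swap])
    apply (rule sum.cong[OF refl])
    apply (rule sum.swap)
    done
  also have "\<dots> = (\<Sum>u\<in>J. \<Sum>v\<in>J. a u * b v * Rc I J P M s u v)"
    by (simp add: Rc_def sum_distrib_left sum_subtractf right_diff_distrib)
  finally show ?thesis .
qed

lemma O_coord:
  assumes fin: "finite I" "finite J"
  shows "O_operator I C J P M \<longleftrightarrow> (\<forall>s\<in>I. \<forall>u\<in>J. \<forall>v\<in>J. Lc I C J M s u v = Rc I J P M s u v)"
proof
  assume O: "O_operator I C J P M"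
  show "\<forall>s\<in>I. \<forall>u\<in>J. \<forall>v\<in>J. Lc I C J M s u v = Rc I J P M s u v"
  proof (intro ballI)
    fix s u v assume s: "s \<in> I" and u: "u \<in> J" and v: "v \<in> J"
    have "brk I C (linmap I J M (bv u)) (linmap I J M (bv v)) s =
      linmap I J M (act I J P (linmap I J M (bv u)) (bv v) - act I J P (linmap I J M (bv v)) (bv u)) s"
      using O u v by (simp add: O_operator_def bv_vecs)
    moreover have col: "\<And>F. (\<Sum>ua\<in>J. \<Sum>va\<in>J. bv u ua * bv v va * F ua va) = (F u v :: 'k::comm_ring_1)"
      using u v fin by (simp add: mult.assoc sum_distrib_left[symmetric] sum_bv)
    ultimately
    have "(\<Sum>ua\<in>J. \<Sum>va\<in>J. bv u ua * bv v va * Lc I C J M s ua va) =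
      (\<Sum>ua\<in>J. \<Sum>va\<in>J. bv u ua * bv v va * Rc I J P M s ua va)"
      using s by (simp add: brk_expand rhs_expand)
    then show "Lc I C J M s u v = Rc I J P M s u v"
      by (simp only: col)
  qed
next
  assume H: "\<forall>s\<in>I. \<forall>u\<in>J. \<forall>v\<in>J. Lc I C J M s u v = Rc I J P M s u v"
  show "O_operator I C J P M"
    unfolding O_operator_def
  proof (intro ballI ext)
    fix a b s
    show "brk I C (linmap I J M a) (linmap I J M b) s =
      linmap I J M (act I J P (linmap I J M a) b - act I J P (linmap I J M b) a) s"
    proof (cases "s \<in> I")
      case True
      then show ?thesis using H by (simp add: brk_expand rhs_expand)
    next
      case False
      then show ?thesis by (simp add: brk_def linmap_def)
    qed
  qed
qed


lemma rK: "T_minus_sigma_T T (Inl i) (Inr b) = T i b" "T_minus_sigma_T T (Inr b) (Inl i) = - T i b"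
  "T_minus_sigma_T T (Inl i) (Inl j) = 0" "T_minus_sigma_T T (Inr a) (Inr b) = 0"
  by (simp_all add: T_minus_sigma_T_def tensor_of_map_def flip_tensor_def)

lemma DK: "semidirect C R (Inl i) (Inl j) (Inl k) = C i j k"
  "semidirect C R (Inl i) (Inr c) (Inr b) = - R i c b"
  "semidirect C R (Inr c) (Inl i) (Inr b) = R i c b"
  "semidirect C R (Inl i) (Inl j) (Inr b) = 0"
  "semidirect C R (Inl i) (Inr c) (Inl k) = 0"
  "semidirect C R (Inr c) (Inl i) (Inl k) = 0"
  "semidirect C R (Inr c) (Inr b) x = 0"
  by (simp_all add: semidirect_def dual_rep_def split: sum.split)

lemma PK: "dual_rep (ad_rep D) p c v = - D p c v"
  by (simp add: dual_rep_def ad_rep_def)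

lemma swapI: "(\<Sum>x\<in>A. \<Sum>y\<in>B. f x y) = (\<Sum>y\<in>B. \<Sum>x\<in>A. f x y)"
  by (rule sum.swap)

lemma caseA:
  assumes "finite I" "finite J"
  shows "Lc (I<+>J) (semidirect C R) (I<+>J) (T_minus_sigma_T T) (Inr s) (Inr a) (Inl j) =
         Rc (I<+>J) (I<+>J) (dual_rep (ad_rep (semidirect C R))) (T_minus_sigma_T T) (Inr s) (Inr a) (Inl j)
    \<longleftrightarrow> Lc I C J T j a s = Rc I J R T j a s"
proof -
  have h1: "(\<Sum>x\<in>I. \<Sum>xa\<in>J. T x a * T j xa * R x xa s) = (\<Sum>c\<in>J. \<Sum>i\<in>I. T j c * T i a * R i c s)"
    by (subst sum.swap) (simp add: ac_simps)
  have h2: "(\<Sum>x\<in>I. \<Sum>xa\<in>I. T x s * T xa a * C xa x j) = (\<Sum>i\<in>I. \<Sum>i'\<in>I. T i a * T i' s * C i i' j)"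
    by (subst sum.swap) (simp add: ac_simps)
  have h3: "(\<Sum>x\<in>I. \<Sum>xa\<in>J. - (T x s * T j xa * R x xa a)) = - (\<Sum>c\<in>J. \<Sum>i\<in>I. T j c * T i s * R i c a)"
    by (subst sum.swap) (simp add: ac_simps sum_negf)
  show ?thesis using assms
    apply (simp add: Lc_def Rc_def sum.Plus PK rK DK h1 h2 h3)
    apply (auto simp: algebra_simps)
    done
qed

lemma caseB:
  assumes "finite I" "finite J"
  shows "Lc (I<+>J) (semidirect C R) (I<+>J) (T_minus_sigma_T T) (Inr s) (Inl j) (Inr a) =
         Rc (I<+>J) (I<+>J) (dual_rep (ad_rep (semidirect C R))) (T_minus_sigma_T T) (Inr s) (Inl j) (Inr a)
    \<longleftrightarrow> Lc I C J T j a s = Rc I J R T j a s"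
proof -
  have h1: "(\<Sum>x\<in>J. \<Sum>xa\<in>I. - (T j x * T xa a * R xa x s)) = - (\<Sum>c\<in>J. \<Sum>i\<in>I. T j c * T i a * R i c s)"
    by (simp add: ac_simps sum_negf)
  have h2: "(\<Sum>x\<in>I. \<Sum>xa\<in>I. T x s * T xa a * C xa x j) = (\<Sum>i\<in>I. \<Sum>i'\<in>I. T i a * T i' s * C i i' j)"
    by (subst sum.swap) (simp add: ac_simps)
  have h3: "(\<Sum>x\<in>I. \<Sum>xa\<in>J. - (T x s * T j xa * R x xa a)) = - (\<Sum>c\<in>J. \<Sum>i\<in>I. T j c * T i s * R i c a)"
    by (subst sum.swap) (simp add: ac_simps sum_negf)
  show ?thesis using assms
    apply (simp add: Lc_def Rc_def sum.Plus PK rK DK h1 h2 h3)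
    apply (auto simp: algebra_simps)
    done
qed

lemma caseC:
  assumes "finite I" "finite J"
  shows "Lc (I<+>J) (semidirect C R) (I<+>J) (T_minus_sigma_T T) (Inl k) (Inr a) (Inr b) =
         Rc (I<+>J) (I<+>J) (dual_rep (ad_rep (semidirect C R))) (T_minus_sigma_T T) (Inl k) (Inr a) (Inr b)
    \<longleftrightarrow> Lc I C J T k a b = Rc I J R T k a b"
  using assms by (simp add: Lc_def Rc_def sum.Plus PK rK DK)

lemma caseD1:
  assumes "finite I" "finite J"
  shows "Lc (I<+>J) (semidirect C R) (I<+>J) (T_minus_sigma_T T) (Inr k) (Inr a) (Inr b) =
         Rc (I<+>J) (I<+>J) (dual_rep (ad_rep (semidirect C R))) (T_minus_sigma_T T) (Inr k) (Inr a) (Inr b)"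
  using assms by (simp add: Lc_def Rc_def sum.Plus PK rK DK)

lemma caseD2:
  assumes "finite I" "finite J"
  shows "Lc (I<+>J) (semidirect C R) (I<+>J) (T_minus_sigma_T T) s (Inl a) (Inl b) =
         Rc (I<+>J) (I<+>J) (dual_rep (ad_rep (semidirect C R))) (T_minus_sigma_T T) s (Inl a) (Inl b)"
  using assms by (simp add: Lc_def Rc_def sum.Plus PK rK DK)

lemma caseD3:
  assumes "finite I" "finite J"
  shows "Lc (I<+>J) (semidirect C R) (I<+>J) (T_minus_sigma_T T) (Inl k) (Inl a) (Inr b) =
         Rc (I<+>J) (I<+>J) (dual_rep (ad_rep (semidirect C R))) (T_minus_sigma_T T) (Inl k) (Inl a) (Inr b)"
  using assms by (simp add: Lc_def Rc_def sum.Plus PK rK DK)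

lemma caseD4:
  assumes "finite I" "finite J"
  shows "Lc (I<+>J) (semidirect C R) (I<+>J) (T_minus_sigma_T T) (Inl k) (Inr a) (Inl b) =
         Rc (I<+>J) (I<+>J) (dual_rep (ad_rep (semidirect C R))) (T_minus_sigma_T T) (Inl k) (Inr a) (Inl b)"
  using assms by (simp add: Lc_def Rc_def sum.Plus PK rK DK)

abbreviation "LK I J C R T \<equiv> Lc (I<+>J) (semidirect C R) (I<+>J) (T_minus_sigma_T T)"
abbreviation "RK I J C R T \<equiv> Rc (I<+>J) (I<+>J) (dual_rep (ad_rep (semidirect C R))) (T_minus_sigma_T T)"

lemma OK_coord:
  assumes fin: "finite I" "finite J"
  shows "(\<forall>s\<in>I<+>J. \<forall>u\<in>I<+>J. \<forall>v\<in>I<+>J. LK I J C R T s u v = RK I J C R T s u v)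
    \<longleftrightarrow> (\<forall>s\<in>I. \<forall>u\<in>J. \<forall>v\<in>J. Lc I C J T s u v = Rc I J R T s u v)"
proof
  assume H: "\<forall>s\<in>I<+>J. \<forall>u\<in>I<+>J. \<forall>v\<in>I<+>J. LK I J C R T s u v = RK I J C R T s u v"
  show "\<forall>s\<in>I. \<forall>u\<in>J. \<forall>v\<in>J. Lc I C J T s u v = Rc I J R T s u v"
  proof (intro ballI)
    fix s u v assume "s \<in> I" "u \<in> J" "v \<in> J"
    then have "Inl s \<in> I<+>J" "Inr u \<in> I<+>J" "Inr v \<in> I<+>J" by auto
    then have "LK I J C R T (Inl s) (Inr u) (Inr v) = RK I J C R T (Inl s) (Inr u) (Inr v)"
      using H by blast
    then show "Lc I C J T s u v = Rc I J R T s u v"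
      unfolding caseC[OF fin] .
  qed
next
  assume H: "\<forall>s\<in>I. \<forall>u\<in>J. \<forall>v\<in>J. Lc I C J T s u v = Rc I J R T s u v"
  show "\<forall>s\<in>I<+>J. \<forall>u\<in>I<+>J. \<forall>v\<in>I<+>J. LK I J C R T s u v = RK I J C R T s u v"
  proof (intro ballI)
    fix s u v assume s: "s \<in> I<+>J" and u: "u \<in> I<+>J" and v: "v \<in> I<+>J"
    show "LK I J C R T s u v = RK I J C R T s u v"
    proof (cases s)
      case (Inl k)
      show ?thesis
      proof (cases u)
        case (Inl a)
        show ?thesis
        proof (cases v)
          case (Inl b)
          show ?thesis unfolding \<open>s = Inl k\<close> \<open>u = Inl a\<close> \<open>v = Inl b\<close> by (rule caseD2[OF fin])
        next
          case (Inr b)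
          show ?thesis unfolding \<open>s = Inl k\<close> \<open>u = Inl a\<close> \<open>v = Inr b\<close> by (rule caseD3[OF fin])
        qed
      next
        case (Inr a)
        show ?thesis
        proof (cases v)
          case (Inl b)
          show ?thesis unfolding \<open>s = Inl k\<close> \<open>u = Inr a\<close> \<open>v = Inl b\<close> by (rule caseD4[OF fin])
        next
          case (Inr b)
          have "k \<in> I" "a \<in> J" "b \<in> J" using s u v \<open>s = Inl k\<close> \<open>u = Inr a\<close> \<open>v = Inr b\<close> by auto
          then have "Lc I C J T k a b = Rc I J R T k a b" using H by blast
          then show ?thesis unfolding \<open>s = Inl k\<close> \<open>u = Inr a\<close> \<open>v = Inr b\<close> caseC[OF fin] .
        qed
      qed
    next
      case (Inr k)
      show ?thesis
      proof (cases u)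
        case (Inl a)
        show ?thesis
        proof (cases v)
          case (Inl b)
          show ?thesis unfolding \<open>s = Inr k\<close> \<open>u = Inl a\<close> \<open>v = Inl b\<close> by (rule caseD2[OF fin])
        next
          case (Inr b)
          have "a \<in> I" "b \<in> J" "k \<in> J" using s u v \<open>s = Inr k\<close> \<open>u = Inl a\<close> \<open>v = Inr b\<close> by auto
          then have "Lc I C J T a b k = Rc I J R T a b k" using H by blast
          then show ?thesis unfolding \<open>s = Inr k\<close> \<open>u = Inl a\<close> \<open>v = Inr b\<close> caseB[OF fin] .
        qed
      next
        case (Inr a)
        show ?thesis
        proof (cases v)
          case (Inl b)
          have "b \<in> I" "a \<in> J" "k \<in> J" using s u v \<open>s = Inr k\<close> \<open>u = Inr a\<close> \<open>v = Inl b\<close> by auto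
          then have "Lc I C J T b a k = Rc I J R T b a k" using H by blast
          then show ?thesis unfolding \<open>s = Inr k\<close> \<open>u = Inr a\<close> \<open>v = Inl b\<close> caseA[OF fin] .
        next
          case (Inr b)
          show ?thesis unfolding \<open>s = Inr k\<close> \<open>u = Inr a\<close> \<open>v = Inr b\<close> by (rule caseD1[OF fin])
        qed
      qed
    qed
  qed
qed

lemma OK_iff:
  assumes fin: "finite I" "finite J"
  shows "O_operator (I <+> J) (semidirect C R) (I <+> J) (dual_rep (ad_rep (semidirect C R))) (T_minus_sigma_T T)
     \<longleftrightarrow> O_operator I C J R T"
proof -
  have fK: "finite (I <+> J)" using fin by simp
  show ?thesis
    unfolding O_coord[OF fK fK] O_coord[OF fin] by (rule OK_coord[OF fin])
qed

lemma bv_ml: "bv u x * (y::'k::comm_ring_1) = (if x = u then y else 0)"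
  by (simp add: bv_def)
lemma bv_mr: "(y::'k::comm_ring_1) * bv u x = (if x = u then y else 0)"
  by (simp add: bv_def)
lemma if_ml: "(if c then a else 0) * (y::'k::comm_ring_1) = (if c then a * y else 0)"
  by simp
lemma if_mr: "(y::'k::comm_ring_1) * (if c then a else 0) = (if c then y * a else 0)"
  by simp

lemma sum_if_c: "(\<Sum>j\<in>A. if c then f j else 0) = (if c then sum f A else 0)"
  by simp

lemma brk_bv: "finite K \<Longrightarrow> p \<in> K \<Longrightarrow> q \<in> K \<Longrightarrow> brk K D (bv p) (bv q) s = (if s \<in> K then D p q s else (0::'k::comm_ring_1))"
  by (simp add: brk_def bv_ml if_ml sum_if_c cong: if_cong)

definition mybe_fun :: "'a set \<Rightarrow> ('a \<Rightarrow> 'a \<Rightarrow> 'a \<Rightarrow> 'k::comm_ring_1) \<Rightarrow> ('a \<Rightarrow> 'a \<Rightarrow> 'k) \<Rightarrow> ('a \<times> 'a \<times> 'a \<Rightarrow> 'k)" where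
  "mybe_fun K D r = (\<Sum>p\<in>K. \<Sum>q\<in>K. \<Sum>p'\<in>K. \<Sum>q'\<in>K.
       (\<lambda>w. r p q * r p' q' *
          (tensor3 (brk K D (bv p) (bv p')) (bv q) (bv q') w
         + tensor3 (bv p) (brk K D (bv q) (bv p')) (bv q') w
         + tensor3 (bv p) (bv p') (brk K D (bv q) (bv q')) w)))"

lemma MYBE_mybe: "MYBE K D r \<longleftrightarrow> mybe_fun K D r = 0"
  unfolding MYBE_def mybe_fun_def ..

lemma MYBE_val:
  fixes D :: "'a \<Rightarrow> 'a \<Rightarrow> 'a \<Rightarrow> 'k::comm_ring_1"
  assumes K: "finite K" and s: "s \<in> K" and t: "t \<in> K" and w: "w \<in> K"
  shows "mybe_fun K D r (s, t, w) =
     Lc K D K r s t w + (\<Sum>q\<in>K. \<Sum>p'\<in>K. r s q * r p' w * D q p' t)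
       + (\<Sum>q\<in>K. \<Sum>q'\<in>K. r s q * r t q' * D q q' w)"
  using assms unfolding mybe_fun_def
  apply (simp add: sum_apply_fun tensor3_def brk_bv distrib_left sum.distrib Lc_def cong: sum.cong)
  apply (simp add: bv_ml bv_mr if_ml if_mr sum_if_c mult.assoc cong: if_cong)
  done


lemma MYBE_out:
  fixes D :: "'a \<Rightarrow> 'a \<Rightarrow> 'a \<Rightarrow> 'k::comm_ring_1"
  assumes K: "finite K" and out: "\<not> (s \<in> K \<and> t \<in> K \<and> w \<in> K)"
  shows "mybe_fun K D r (s, t, w) = 0"
  using assms unfolding mybe_fun_def
  apply (simp add: sum_apply_fun tensor3_def brk_bv distrib_left sum.distrib cong: sum.cong)
  apply (simp add: bv_ml bv_mr if_ml if_mr sum_if_c mult.assoc cong: if_cong)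
  done

lemma MYBE_iff:
  fixes D :: "'a \<Rightarrow> 'a \<Rightarrow> 'a \<Rightarrow> 'k::comm_ring_1"
  assumes K: "finite K"
    and anti: "\<forall>p\<in>K. \<forall>q\<in>K. \<forall>s\<in>K. D p q s = - D q p s"
    and skew: "\<And>p q. r p q = - r q p"
  shows "MYBE K D r \<longleftrightarrow> (\<forall>s\<in>K. \<forall>t\<in>K. \<forall>w\<in>K. Lc K D K r s t w = Rc K K (dual_rep (ad_rep D)) r s t w)"
proof -
  have val: "mybe_fun K D r (s, t, w) =
       Lc K D K r s t w - Rc K K (dual_rep (ad_rep D)) r s t w"
    if s: "s \<in> K" and t: "t \<in> K" and w: "w \<in> K" for s t w
  proof -
    have T2: "(\<Sum>q\<in>K. \<Sum>p'\<in>K. r s q * r p' w * D q p' t) = - (\<Sum>c\<in>K. \<Sum>i\<in>K. r s c * r i w * D i c t)"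
    proof -
      have "(\<Sum>q\<in>K. \<Sum>p'\<in>K. r s q * r p' w * D q p' t) = (\<Sum>c\<in>K. \<Sum>i\<in>K. - (r s c * r i w * D i c t))"
      proof (rule sum.cong[OF refl], rule sum.cong[OF refl])
        fix c i assume "c \<in> K" "i \<in> K"
        then have "D c i t = - D i c t" using anti t by blast
        then show "r s c * r i w * D c i t = - (r s c * r i w * D i c t)" by simp
      qed
      then show ?thesis by (simp add: sum_negf)
    qed
    have T3: "(\<Sum>q\<in>K. \<Sum>q'\<in>K. r s q * r t q' * D q q' w) = (\<Sum>c\<in>K. \<Sum>i\<in>K. r s c * r i t * D i c w)"
    proof (rule sum.cong[OF refl], rule sum.cong[OF refl])
      fix c i assume "c \<in> K" "i \<in> K"
      then have "D c i w = - D i c w" using anti w by blast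
      then show "r s c * r t i * D c i w = r s c * r i t * D i c w"
        using skew[of t i] by simp
    qed
    show ?thesis
      using MYBE_val[OF K s t w, of D r] T2 T3
      by (simp add: Rc_def PK sum_negf)
  qed
  show ?thesis
  proof
    assume "MYBE K D r"
    then have Z: "\<And>x. mybe_fun K D r x = 0"
      unfolding MYBE_mybe by simp
    show "\<forall>s\<in>K. \<forall>t\<in>K. \<forall>w\<in>K. Lc K D K r s t w = Rc K K (dual_rep (ad_rep D)) r s t w"
      using Z val by (metis eq_iff_diff_eq_0)
  next
    assume H: "\<forall>s\<in>K. \<forall>t\<in>K. \<forall>w\<in>K. Lc K D K r s t w = Rc K K (dual_rep (ad_rep D)) r s t w"
    show "MYBE K D r"
      unfolding MYBE_mybe
    proof (rule ext)
      fix x :: "'a \<times> 'a \<times> 'a"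
      obtain s t w where x: "x = (s, t, w)" by (cases x) auto
      show "mybe_fun K D r x = 0 x"
      proof (cases "s \<in> K \<and> t \<in> K \<and> w \<in> K")
        case True
        then show ?thesis using val H x by simp
      next
        case False
        then show ?thesis using MYBE_out[OF K False] x by simp
      qed
    qed
  qed
qed


lemma C_anti:
  assumes K: "finite I" and M: "malcev_alg I C"
  shows "\<forall>i\<in>I. \<forall>j\<in>I. \<forall>k\<in>I. C i j k = - C j i k"
proof (intro ballI)
  fix i j k assume i: "i \<in> I" and j: "j \<in> I" and k: "k \<in> I"
  have A: "\<forall>x\<in>vecs I. \<forall>y\<in>vecs I. brk I C x y = - brk I C y x"
    using M unfolding malcev_alg_def by (rule conjunct1)
  have "bv i \<in> vecs I" "bv j \<in> vecs I" using i j by (auto intro: bv_vecs)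
  then have "brk I C (bv i) (bv j) = - brk I C (bv j) (bv i)"
    using A by blast
  then have "brk I C (bv i) (bv j) k = - brk I C (bv j) (bv i) k" by simp
  then show "C i j k = - C j i k" using K i j k by (simp add: brk_bv)
qed

lemma D_anti:
  assumes "\<forall>i\<in>I. \<forall>j\<in>I. \<forall>k\<in>I. C i j k = - C j i k"
  shows "\<forall>p\<in>I<+>J. \<forall>q\<in>I<+>J. \<forall>s\<in>I<+>J. semidirect C R p q s = - semidirect C R q p s"
proof (intro ballI)
  fix p q s assume p: "p \<in> I<+>J" and q: "q \<in> I<+>J" and s: "s \<in> I<+>J"
  show "semidirect C R p q s = - semidirect C R q p s"
  proof (cases p; cases q; cases s)
    fix i j k assume e: "p = Inl i" "q = Inl j" "s = Inl k"
    then have "i \<in> I" "j \<in> I" "k \<in> I" using p q s by auto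
    then have "C i j k = - C j i k" using assms by blast
    then show ?thesis using e by (simp add: DK)
  qed (simp_all add: DK)
qed

lemma r_skew: "T_minus_sigma_T T p q = - T_minus_sigma_T T q p"
  by (simp add: T_minus_sigma_T_def flip_tensor_def)

theorem corollary2p11:
  fixes I :: "'i set" and J :: "'j set"
    and C :: "'i \<Rightarrow> 'i \<Rightarrow> 'i \<Rightarrow> 'k::field_char_0"
    and R :: "'i \<Rightarrow> 'j \<Rightarrow> 'j \<Rightarrow> 'k"
    and T :: "'i \<Rightarrow> 'j \<Rightarrow> 'k"
  assumes "finite I" and "finite J"
    and "malcev_alg I C"
    and "is_rep I C J R"
  shows "(O_operator I C J R T \<longleftrightarrow>
            skew_tensor (I <+> J) (T_minus_sigma_T T) \<and>
            MYBE (I <+> J) (semidirect C R) (T_minus_sigma_T T))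
       \<and> (O_operator I C J R T \<longleftrightarrow>
            O_operator (I <+> J) (semidirect C R) (I <+> J)
              (dual_rep (ad_rep (semidirect C R))) (T_minus_sigma_T T))"
proof -
  have fK: "finite (I <+> J)" using assms by simp
  have sk: "skew_tensor (I <+> J) (T_minus_sigma_T T)"
    unfolding skew_tensor_def using r_skew by blast
  have Da: "\<forall>p\<in>I<+>J. \<forall>q\<in>I<+>J. \<forall>s\<in>I<+>J. semidirect C R p q s = - semidirect C R q p s"
    using D_anti C_anti[OF assms(1,3)] by blast
  have e1: "O_operator I C J R T \<longleftrightarrow>
            O_operator (I <+> J) (semidirect C R) (I <+> J)
              (dual_rep (ad_rep (semidirect C R))) (T_minus_sigma_T T)"
    using OK_iff[OF assms(1,2), of C R T] by blast
  have e2: "MYBE (I <+> J) (semidirect C R) (T_minus_sigma_T T) \<longleftrightarrow>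
            O_operator (I <+> J) (semidirect C R) (I <+> J)
              (dual_rep (ad_rep (semidirect C R))) (T_minus_sigma_T T)"
  proof -
    have sk2: "\<And>p q. T_minus_sigma_T T p q = - T_minus_sigma_T T q p" by (rule r_skew)
    show ?thesis
      unfolding MYBE_iff[OF fK Da sk2] O_coord[OF fK fK] ..
  qed
  show ?thesis using e1 e2 sk by blast
qed

end
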